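(* Let $p_n:\mathrm{Br}_n\to\widehat{\mathrm S}_n$ be the homomorphism defined on generators by $\sigma_{i,i+1}\mapsto((i\ i{+}1),1)$. Then there is a short exact sequence $1\to\widehat{\mathrm{PBr}}_n\to\mathrm{Br}_n\xrightarrow{p_n}\widehat{\mathrm S}_n\to1$, i.e. $p_n$ is surjective with kernel $\widehat{\mathrm{PBr}}_n$.
   Context: $n\ge2$. $\widehat{\mathrm S}_n=\{(\sigma,d)\in\mathrm S_n\times\mathbb Z: d\text{ odd}\iff\operatorname{sgn}\sigma=-1\}$. $\mathrm{Br}_n$ is the braid group with Artin generators $\sigma_{i,i+1}$; $\mathrm{PBr}_n=\pi_1(\mathrm{Conf}_n(\mathbb C))$ the pure braid group. With $q_n:\mathrm{Conf}_n(\mathbb C)\to\mathbb C^*$, $q_n(x)=\prod_{i<j}(x_i-x_j)$, the Milnor fiber is $F_n=q_n^{-1}(1)$, and $\widehat{\mathrm{PBr}}_n:=\pi_1(F_n)$, identified with the kernel of $\pi_1(q_n):\mathrm{PBr}_n\to\mathbb Z$ (which sends each standard generator $a_{i,j}$ to $1$). *)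

theory Defs
  imports "HOL-Algebra.Algebra" "HOL-Combinatorics.Permutations" "HOL-Combinatorics.Transposition"
begin

text \<open>Letters: (i, True) stands for the Artin generator sigma_{i,i+1}, (i, False) for its
inverse, with 1 <= i < n.  Braid words are lists of letters.\<close>

type_synonym bletter = "nat \<times> bool"
type_synonym bword = "bletter list"

definition valid_word :: "nat \<Rightarrow> bword \<Rightarrow> bool" where
  "valid_word n w \<longleftrightarrow> (\<forall>l\<in>set w. 1 \<le> fst l \<and> fst l < n)"

inductive braid_eq :: "nat \<Rightarrow> bword \<Rightarrow> bword \<Rightarrow> bool" for n where
  refl: "valid_word n w \<Longrightarrow> braid_eq n w w"
| sym: "braid_eq n v w \<Longrightarrow> braid_eq n w v"
| trans: "braid_eq n u v \<Longrightarrow> braid_eq n v w \<Longrightarrow> braid_eq n u w"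
| ctxt: "braid_eq n v w \<Longrightarrow> valid_word n a \<Longrightarrow> valid_word n b \<Longrightarrow> braid_eq n (a @ v @ b) (a @ w @ b)"
| cancel: "1 \<le> i \<Longrightarrow> i < n \<Longrightarrow> braid_eq n [(i, e), (i, \<not> e)] []"
| far_comm: "1 \<le> i \<Longrightarrow> i < n \<Longrightarrow> 1 \<le> j \<Longrightarrow> j < n \<Longrightarrow> i + 2 \<le> j \<Longrightarrow>
    braid_eq n [(i, True), (j, True)] [(j, True), (i, True)]"
| braid: "1 \<le> i \<Longrightarrow> i + 1 < n \<Longrightarrow>
    braid_eq n [(i, True), (i+1, True), (i, True)] [(i+1, True), (i, True), (i+1, True)]"

definition braid_class :: "nat \<Rightarrow> bword \<Rightarrow> bword set" where
  "braid_class n w = {v. braid_eq n w v}"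

definition Br :: "nat \<Rightarrow> bword set monoid" where
  "Br n = \<lparr> carrier = {braid_class n w | w. valid_word n w},
            monoid.mult = (\<lambda>A B. \<Union>a\<in>A. \<Union>b\<in>B. braid_class n (a @ b)),
            one = braid_class n [] \<rparr>"

definition rep :: "bword set \<Rightarrow> bword" where
  "rep A = (SOME w. w \<in> A)"

definition hatS :: "nat \<Rightarrow> ((nat \<Rightarrow> nat) \<times> int) monoid" where
  "hatS n = \<lparr> carrier = {(s, d). s permutes {1..n} \<and> (odd d \<longleftrightarrow> sign s = -1)},
             monoid.mult = (\<lambda>(s, d) (t, e). (s \<circ> t, d + e)),
             one = (id, 0) \<rparr>"

definition letter_img :: "bletter \<Rightarrow> (nat \<Rightarrow> nat) \<times> int" where
  "letter_img l = (transpose (fst l) (fst l + 1), if snd l then 1 else -1)"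

definition word_img :: "bword \<Rightarrow> (nat \<Rightarrow> nat) \<times> int" where
  "word_img w = foldr (\<lambda>l (s, d). (fst (letter_img l) \<circ> s, snd (letter_img l) + d)) w (id, 0)"

definition p :: "nat \<Rightarrow> bword set \<Rightarrow> (nat \<Rightarrow> nat) \<times> int" where
  "p n A = word_img (rep A)"

definition PBr :: "nat \<Rightarrow> bword set set" where
  "PBr n = {A \<in> carrier (Br n). fst (word_img (rep A)) = id}"

definition exp_sum :: "bword \<Rightarrow> int" where
  "exp_sum w = (\<Sum>l\<leftarrow>w. if snd l then 1 else -1)"

text \<open>pi_1(q_n) : PBr_n -> Z.  Each standard generator
  a_{i,j} = sigma_{j-1} ... sigma_{i+1} sigma_i^2 sigma_{i+1}^{-1} ... sigma_{j-1}^{-1}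
  has exponent sum 2 and is sent to 1, so the map is half the exponent sum.\<close>
definition qhom :: "bword set \<Rightarrow> int" where
  "qhom A = exp_sum (rep A) div 2"

definition hatPBr :: "nat \<Rightarrow> bword set set" where
  "hatPBr n = {A \<in> PBr n. qhom A = 0}"

end

theory Submission
  imports Defs
begin

lemma braid_eq_valid: "braid_eq n v w \<Longrightarrow> valid_word n v \<and> valid_word n w"
  by (induction rule: braid_eq.induct) (auto simp: valid_word_def)

lemma valid_append[simp]: "valid_word n (a @ b) \<longleftrightarrow> valid_word n a \<and> valid_word n b"
  by (auto simp: valid_word_def)

lemma valid_Nil[simp]: "valid_word n []"
  by (auto simp: valid_word_def)

lemma braid_eq_app:
  assumes "braid_eq n a a'" "braid_eq n b b'"
  shows "braid_eq n (a @ b) (a' @ b')"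
proof -
  have va: "valid_word n a'" and vb: "valid_word n b" using assms braid_eq_valid by blast+
  have 1: "braid_eq n ([] @ a @ b) ([] @ a' @ b)" by (rule braid_eq.ctxt[OF assms(1)]) (use vb in auto)
  have 2: "braid_eq n (a' @ b @ []) (a' @ b' @ [])" by (rule braid_eq.ctxt[OF assms(2)]) (use va in auto)
  from 1 2 show ?thesis by (auto intro: braid_eq.trans)
qed

lemma class_eq:
  assumes "braid_eq n v w" shows "braid_class n v = braid_class n w"
  using assms unfolding braid_class_def by (auto intro: braid_eq.trans braid_eq.sym)

lemma mem_class: "valid_word n w \<Longrightarrow> w \<in> braid_class n w"
  by (simp add: braid_class_def braid_eq.refl)

lemma mult_class:
  assumes "valid_word n a" "valid_word n b"
  shows "monoid.mult (Br n) (braid_class n a) (braid_class n b) = braid_class n (a @ b)"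
proof -
  have eq: "braid_class n (a' @ b') = braid_class n (a @ b)"
    if "a' \<in> braid_class n a" "b' \<in> braid_class n b" for a' b'
  proof -
    have "braid_eq n a a'" "braid_eq n b b'" using that by (auto simp: braid_class_def)
    then have "braid_eq n (a @ b) (a' @ b')" by (rule braid_eq_app)
    then show ?thesis by (rule class_eq[symmetric])
  qed
  have "monoid.mult (Br n) (braid_class n a) (braid_class n b)
     = (\<Union>a'\<in>braid_class n a. \<Union>b'\<in>braid_class n b. braid_class n (a' @ b'))"
    by (simp add: Br_def)
  also have "\<dots> = (\<Union>a'\<in>braid_class n a. \<Union>b'\<in>braid_class n b. braid_class n (a @ b))"
    by (rule SUP_cong[OF HOL.refl], rule SUP_cong[OF HOL.refl], erule (1) eq)
  also have "\<dots> = braid_class n (a @ b)"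
    using mem_class[OF assms(1)] mem_class[OF assms(2)] by blast
  finally show ?thesis .
qed

definition winv :: "bword \<Rightarrow> bword" where
  "winv w = rev (map (\<lambda>(i, e). (i, \<not> e)) w)"

lemma winv_valid: "valid_word n w \<Longrightarrow> valid_word n (winv w)"
  by (auto simp: valid_word_def winv_def)

lemma winv_cancel: "valid_word n w \<Longrightarrow> braid_eq n (winv w @ w) []"
proof (induction w)
  case Nil
  then show ?case by (simp add: winv_def braid_eq.refl)
next
  case (Cons x w)
  obtain i e where x: "x = (i, e)" by (cases x)
  have vw: "valid_word n w" and i: "1 \<le> i" "i < n" using Cons.prems x by (auto simp: valid_word_def)
  have c: "braid_eq n [(i, \<not> e), (i, e)] []" using braid_eq.cancel[OF i, of "\<not> e"] by simp
  have "braid_eq n (winv w @ [(i, \<not> e), (i, e)] @ w) (winv w @ [] @ w)"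
    by (rule braid_eq.ctxt[OF c winv_valid[OF vw] vw])
  moreover have "winv (x # w) @ x # w = winv w @ [(i, \<not> e), (i, e)] @ w"
    by (simp add: winv_def x)
  ultimately show ?case using Cons.IH[OF vw] by (auto intro: braid_eq.trans)
qed

lemma Br_carrier: "carrier (Br n) = {braid_class n w | w. valid_word n w}"
  by (simp add: Br_def)

lemma one_Br: "\<one>\<^bsub>Br n\<^esub> = braid_class n []"
  by (simp add: Br_def)

lemma group_Br: "group (Br n)"
proof (rule groupI)
  fix x y assume "x \<in> carrier (Br n)" "y \<in> carrier (Br n)"
  then obtain a b where "valid_word n a" "x = braid_class n a" "valid_word n b" "y = braid_class n b"
    by (auto simp: Br_carrier)
  then show "x \<otimes>\<^bsub>Br n\<^esub> y \<in> carrier (Br n)"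
    by (simp only: mult_class) (auto simp: Br_carrier)
next
  show "\<one>\<^bsub>Br n\<^esub> \<in> carrier (Br n)" by (auto simp: Br_def)
next
  fix x y z assume "x \<in> carrier (Br n)" "y \<in> carrier (Br n)" "z \<in> carrier (Br n)"
  then obtain a b c where "valid_word n a" "x = braid_class n a" "valid_word n b" "y = braid_class n b"
     "valid_word n c" "z = braid_class n c"
    by (auto simp: Br_carrier)
  then show "x \<otimes>\<^bsub>Br n\<^esub> y \<otimes>\<^bsub>Br n\<^esub> z = x \<otimes>\<^bsub>Br n\<^esub> (y \<otimes>\<^bsub>Br n\<^esub> z)"
    by (simp add: mult_class)
next
  fix x assume "x \<in> carrier (Br n)"
  then obtain a where "valid_word n a" "x = braid_class n a" by (auto simp: Br_carrier)
  then show "\<one>\<^bsub>Br n\<^esub> \<otimes>\<^bsub>Br n\<^esub> x = x"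
    using mult_class[of n "[]" a] by (simp add: one_Br)
next
  fix x assume "x \<in> carrier (Br n)"
  then obtain w where w: "valid_word n w" "x = braid_class n w" by (auto simp: Br_carrier)
  have "braid_class n (winv w) \<in> carrier (Br n)" using winv_valid[OF w(1)] by (auto simp: Br_carrier)
  moreover have "braid_class n (winv w) \<otimes>\<^bsub>Br n\<^esub> x = \<one>\<^bsub>Br n\<^esub>"
    using w mult_class[OF winv_valid[OF w(1)] w(1)] class_eq[OF winv_cancel[OF w(1)]]
    by (simp add: one_Br)
  ultimately show "\<exists>y\<in>carrier (Br n). y \<otimes>\<^bsub>Br n\<^esub> x = \<one>\<^bsub>Br n\<^esub>" by blast
qed


lemma wi_Nil[simp]: "word_img [] = (id, 0)"
  by (simp add: word_img_def)

lemma wi_Cons[simp]: "word_img (l # w) =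
   (transpose (fst l) (fst l + 1) \<circ> fst (word_img w), (if snd l then 1 else -1) + snd (word_img w))"
  by (simp add: word_img_def split_def letter_img_def)

lemma wi_append: "word_img (a @ b) = (fst (word_img a) \<circ> fst (word_img b), snd (word_img a) + snd (word_img b))"
  by (induction a) (auto simp: comp_assoc)

lemma transpose_invol: "transpose a b \<circ> transpose a b = id"
  by (simp add: fun_eq_iff)

lemma braid_eq_wi: "braid_eq n v w \<Longrightarrow> word_img v = word_img w"
proof (induction rule: braid_eq.induct)
  case (ctxt v w a b)
  then show ?case by (simp add: wi_append)
next
  case (cancel i e)
  then show ?case by (simp add: comp_assoc[symmetric] transpose_invol)
next
  case (far_comm i j)
  then show ?case by (auto simp: fun_eq_iff transpose_def)
next
  case (braid i)
  then show ?case by (auto simp: fun_eq_iff transpose_def)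
qed auto

lemma rep_in: "valid_word n a \<Longrightarrow> rep (braid_class n a) \<in> braid_class n a"
  unfolding rep_def by (rule someI, rule mem_class)

lemma p_class: "valid_word n a \<Longrightarrow> p n (braid_class n a) = word_img a"
  using rep_in[of n a] by (simp add: p_def braid_class_def braid_eq_wi)

lemma wi_props: "valid_word n w \<Longrightarrow> fst (word_img w) permutes {1..n} \<and> permutation (fst (word_img w))
   \<and> sign (fst (word_img w)) = (if even (length w) then 1 else -1)
   \<and> (even (snd (word_img w)) \<longleftrightarrow> even (length w))"
proof (induction w)
  case Nil
  show ?case using permutes_id[of "{1..n}"] by (simp add: id_def)
next
  case (Cons l w)
  then have vw: "valid_word n w" and l: "1 \<le> fst l" "fst l < n" by (auto simp: valid_word_def)
  have t: "transpose (fst l) (fst l + 1) permutes {1..n}" using l by (intro permutes_swap_id) auto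
  define T where "T = transpose (fst l) (fst l + 1)"
  define P where "P = fst (word_img w)"
  have IH: "P permutes {1..n}" "permutation P" "sign P = (if even (length w) then 1 else -1)"
      "even (snd (word_img w)) \<longleftrightarrow> even (length w)"
    using Cons.IH[OF vw] by (auto simp: P_def)
  have "T \<circ> P permutes {1..n}" using t IH by (simp add: T_def permutes_compose)
  moreover have "permutation (T \<circ> P)" using IH by (simp add: T_def permutation_compose permutation_swap_id)
  moreover have "sign (T \<circ> P) = - sign P"
    using IH by (simp add: T_def sign_compose permutation_swap_id sign_swap_id)
  moreover have e1: "fst (word_img (l # w)) = T \<circ> P" by (simp add: T_def P_def)
  moreover have e2: "snd (word_img (l # w)) = (if snd l then 1 else -1) + snd (word_img w)" by simp
  moreover have "length (l # w) = Suc (length w)" by simp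
  ultimately show ?case using IH by (simp only:) (cases "snd l"; auto)
qed

lemma wi_exp: "snd (word_img w) = exp_sum w"
  by (induction w) (auto simp: exp_sum_def)

lemma carrier_hatS: "(s, d) \<in> carrier (hatS n) \<longleftrightarrow> s permutes {1..n} \<and> (odd d \<longleftrightarrow> sign s = -1)"
  by (simp add: hatS_def)

lemma wi_carrier: "valid_word n w \<Longrightarrow> word_img w \<in> carrier (hatS n)"
  using wi_props[of n w] by (cases "word_img w") (auto simp: carrier_hatS)

lemma group_hatS: "group (hatS n)"
proof (rule groupI)
  fix x y assume "x \<in> carrier (hatS n)" "y \<in> carrier (hatS n)"
  moreover obtain s1 d1 s2 d2 where "x = (s1, d1)" "y = (s2, d2)" by (cases x; cases y)
  ultimately have s: "s1 permutes {1..n}" "odd d1 \<longleftrightarrow> sign s1 = -1" and t: "s2 permutes {1..n}" "odd d2 \<longleftrightarrow> sign s2 = -1"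
    and xy: "x = (s1, d1)" "y = (s2, d2)" by (auto simp: carrier_hatS)
  have ps: "permutation s1" "permutation s2" using s t permutation_permutes by blast+
  have ss: "sign s1 = 1 \<or> sign s1 = -1" "sign s2 = 1 \<or> sign s2 = -1" by (auto simp: sign_def)
  show "x \<otimes>\<^bsub>hatS n\<^esub> y \<in> carrier (hatS n)"
    using s t ss xy by (auto simp: hatS_def permutes_compose sign_compose[OF ps])
next
  show "\<one>\<^bsub>hatS n\<^esub> \<in> carrier (hatS n)" by (auto simp: hatS_def permutes_id)
next
  fix x y z assume "x \<in> carrier (hatS n)" "y \<in> carrier (hatS n)" "z \<in> carrier (hatS n)"
  then show "x \<otimes>\<^bsub>hatS n\<^esub> y \<otimes>\<^bsub>hatS n\<^esub> z = x \<otimes>\<^bsub>hatS n\<^esub> (y \<otimes>\<^bsub>hatS n\<^esub> z)"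
    by (cases x; cases y; cases z) (auto simp: hatS_def comp_assoc)
next
  fix x assume "x \<in> carrier (hatS n)"
  then show "\<one>\<^bsub>hatS n\<^esub> \<otimes>\<^bsub>hatS n\<^esub> x = x"
    by (cases x) (auto simp: hatS_def)
next
  fix x assume x: "x \<in> carrier (hatS n)"
  obtain s d where sd: "x = (s, d)" by (cases x)
  have sp: "s permutes {1..n}" and par: "odd d \<longleftrightarrow> sign s = -1" using x sd by (auto simp: carrier_hatS)
  have pm: "permutation s" using sp permutation_permutes by blast
  have "(Hilbert_Choice.inv s, -d) \<in> carrier (hatS n)"
    using sp par by (simp add: carrier_hatS permutes_inv sign_inverse[OF pm])
  moreover have "(Hilbert_Choice.inv s, -d) \<otimes>\<^bsub>hatS n\<^esub> x = \<one>\<^bsub>hatS n\<^esub>"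
    using sd permutes_inv_o(2)[OF sp] by (simp add: hatS_def)
  ultimately show "\<exists>y\<in>carrier (hatS n). y \<otimes>\<^bsub>hatS n\<^esub> x = \<one>\<^bsub>hatS n\<^esub>" by blast
qed


lemma hom_p: "p n \<in> hom (Br n) (hatS n)"
proof -
  have "p n A \<in> carrier (hatS n)" if "A \<in> carrier (Br n)" for A
    using that by (auto simp: Br_carrier p_class wi_carrier)
  moreover have "p n (A \<otimes>\<^bsub>Br n\<^esub> B) = p n A \<otimes>\<^bsub>hatS n\<^esub> p n B"
    if AB: "A \<in> carrier (Br n)" "B \<in> carrier (Br n)" for A B
  proof -
    obtain a where "valid_word n a" "A = braid_class n a"
      using AB by (auto simp: Br_carrier)
    moreover obtain b where "valid_word n b" "B = braid_class n b"
      using AB by (auto simp: Br_carrier)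
    ultimately show ?thesis
      by (simp add: mult_class p_class wi_append hatS_def split_def)
  qed
  ultimately show ?thesis by (auto simp: hom_def)
qed

lemma transpose_conj: "(a::nat) < b \<Longrightarrow>
  transpose b (b+1) \<circ> transpose a b \<circ> transpose b (b+1) = transpose a (b+1)"
  by (auto simp: fun_eq_iff transpose_def)

lemma trans_word: "1 \<le> a \<Longrightarrow> a < b \<Longrightarrow> b \<le> n \<Longrightarrow>
   \<exists>w. valid_word n w \<and> fst (word_img w) = transpose a b"
proof (induction b)
  case 0
  then show ?case by simp
next
  case (Suc b)
  show ?case
  proof (cases "a = b")
    case True
    then show ?thesis using Suc.prems
      by (intro exI[of _ "[(a, True)]"]) (auto simp: valid_word_def)
  next
    case False
    then have ab: "a < b" using Suc.prems by simp
    obtain w where w: "valid_word n w" "fst (word_img w) = transpose a b"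
      using Suc.IH Suc.prems ab by auto
    let ?w = "[(b, True)] @ w @ [(b, True)]"
    have "valid_word n ?w" using w Suc.prems ab by (auto simp: valid_word_def)
    moreover have "fst (word_img ?w) = transpose a (Suc b)"
      using transpose_conj[OF ab] w by (simp only: wi_append) (simp add: comp_assoc)
    ultimately show ?thesis by blast
  qed
qed

lemma trans_word2: "a \<in> {1..n} \<Longrightarrow> b \<in> {1..n} \<Longrightarrow>
   \<exists>w. valid_word n w \<and> fst (word_img w) = transpose a b"
proof -
  assume a: "a \<in> {1..n}" and b: "b \<in> {1..n}"
  consider "a = b" | "a < b" | "b < a" by linarith
  then show ?thesis
  proof cases
    case 1 then show ?thesis by (intro exI[of _ "[]"]) simp
  next
    case 2 then show ?thesis using a b trans_word[of a b n] by auto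
  next
    case 3 then show ?thesis using a b trans_word[of b a n] by (auto simp: transpose_commute)
  qed
qed

lemma perm_word: assumes "s permutes {1..n}" shows "\<exists>w. valid_word n w \<and> fst (word_img w) = s"
  using assms finite_atLeastAtMost
proof (induction rule: permutes_induct)
  case id
  then show ?case by (intro exI[of _ "[]"]) simp
next
  case (swap a b q)
  obtain w where w: "valid_word n w" "fst (word_img w) = q" using swap.IH by blast
  obtain v where v: "valid_word n v" "fst (word_img v) = transpose a b"
    using trans_word2 swap.hyps by blast
  show ?case using v w by (intro exI[of _ "v @ w"]) (simp add: wi_append)
qed

lemma pad: "fst (word_img (replicate (2*m) (1, e))) = id \<and>
   snd (word_img (replicate (2*m) (1, e))) = (if e then 2 * int m else - 2 * int m)"
proof (induction m)
  case 0
  then show ?case by simp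
next
  case (Suc m)
  have "replicate (2 * Suc m) (1, e) = (1, e) # (1, e) # replicate (2*m) (1, e)" by simp
  then show ?case using Suc by (simp add: comp_assoc[symmetric] transpose_invol)
qed

lemma valid_pad: "2 \<le> n \<Longrightarrow> valid_word n (replicate k (1, e))"
  by (auto simp: valid_word_def)


lemma surj_p:
  assumes n: "2 \<le> n"
  shows "p n ` carrier (Br n) = carrier (hatS n)"
proof
  show "p n ` carrier (Br n) \<subseteq> carrier (hatS n)"
    by (auto simp: Br_carrier p_class wi_carrier)
next
  show "carrier (hatS n) \<subseteq> p n ` carrier (Br n)"
  proof
    fix x assume x: "x \<in> carrier (hatS n)"
    obtain s d where sd: "x = (s, d)" by (cases x)
    have sp: "s permutes {1..n}" and par: "odd d \<longleftrightarrow> sign s = -1" using x sd by (auto simp: carrier_hatS)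
    obtain w where w: "valid_word n w" "fst (word_img w) = s" using perm_word[OF sp] by blast
    have pr: "sign s = (if even (length w) then 1 else -1)" "even (snd (word_img w)) \<longleftrightarrow> even (length w)"
      using wi_props[OF w(1)] w(2) by auto
    have ev: "even (d - snd (word_img w))" using pr par by (cases "even (length w)") auto
    obtain k where k: "d - snd (word_img w) = 2 * k" using ev by (rule evenE)
    define w' where "w' = (if k \<ge> 0 then w @ replicate (2 * nat k) (1, True)
                           else w @ replicate (2 * nat (-k)) (1, False))"
    have v': "valid_word n w'" using w(1) valid_pad[OF n] by (simp add: w'_def)
    have "word_img w' = (s, d)"
    proof (cases "k \<ge> 0")
      case True
      then show ?thesis using pad[of "nat k" True] w k by (simp add: w'_def wi_append)
    next
      case False
      then show ?thesis using pad[of "nat (-k)" False] w k by (simp add: w'_def wi_append)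
    qed
    then have "p n (braid_class n w') = x" using p_class[OF v'] sd by simp
    moreover have "braid_class n w' \<in> carrier (Br n)" using v' by (auto simp: Br_carrier)
    ultimately show "x \<in> p n ` carrier (Br n)" by blast
  qed
qed

lemma kernel_p: "kernel (Br n) (hatS n) (p n) = hatPBr n"
proof -
  have "(p n A = (id, 0)) \<longleftrightarrow> (fst (word_img (rep A)) = id \<and> qhom A = 0)"
    if A: "A \<in> carrier (Br n)" for A
  proof -
    obtain a where a: "valid_word n a" "A = braid_class n a" using A by (auto simp: Br_carrier)
    have "rep A \<in> braid_class n a" using rep_in[OF a(1)] a by simp
    then have vr: "valid_word n (rep A)" using braid_eq_valid by (auto simp: braid_class_def)
    have "fst (word_img (rep A)) = id \<Longrightarrow> even (exp_sum (rep A))"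
      using wi_props[OF vr] wi_exp[of "rep A"] by (auto split: if_splits)
    then show ?thesis unfolding p_def qhom_def
      by (cases "word_img (rep A)") (auto simp: wi_exp[symmetric] elim!: evenE)
  qed
  then show ?thesis
    by (auto simp: kernel_def hatPBr_def PBr_def hatS_def)
qed

theorem mainTheorem15:
  fixes n :: nat
  assumes "n \<ge> 2"
  shows "group (Br n) \<and> group (hatS n) \<and> p n \<in> hom (Br n) (hatS n) \<and>
         p n ` carrier (Br n) = carrier (hatS n) \<and>
         kernel (Br n) (hatS n) (p n) = hatPBr n"
  using group_Br group_hatS hom_p surj_p[OF assms] kernel_p by blast

end
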